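(* Let $X$ be a discrete random variable and $U$ a continuously distributed random variable with $U\sim\mathrm{Unif}[0,1]$, and let $\mathcal{T}\subseteq\mathbb{R}$. Then $U$ is $\mathcal{T}$-independent of $X$ if and only if \[ \mathbb{E}\big(\Pr(X=x\mid U)\mid U\in(t_1,t_2)\big)=\Pr(X=x)\quad\text{for all }x\in\operatorname{supp}(X) \] for all $t_1,t_2\in\mathcal{T}\cup\{0,1\}$ with $t_1<t_2$.
   Context: $U$ is $\mathcal{T}$-independent of $X$ if $F_{U\mid X}(\tau\mid x)=F_U(\tau)$ for all $x\in\operatorname{supp}(X)$ and all $\tau\in\mathcal{T}$, where $F_{U\mid X}(\cdot\mid x)$ is the conditional cdf of $U$ given $X=x$ and $F_U$ the marginal cdf of $U$. *)

theory Defs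
  imports "HOL-Probability.Probability"
begin

definition disc_supp :: "'a measure \<Rightarrow> ('a \<Rightarrow> 'b) \<Rightarrow> 'b set" where
  "disc_supp M X = {x. \<P>(\<omega> in M. X \<omega> = x) > 0}"

definition cdf_rv :: "'a measure \<Rightarrow> ('a \<Rightarrow> real) \<Rightarrow> real \<Rightarrow> real" where
  "cdf_rv M U \<tau> = \<P>(\<omega> in M. U \<omega> \<le> \<tau>)"

definition cond_cdf_rv :: "'a measure \<Rightarrow> ('a \<Rightarrow> real) \<Rightarrow> ('a \<Rightarrow> 'b) \<Rightarrow> real \<Rightarrow> 'b \<Rightarrow> real" where
  "cond_cdf_rv M U X \<tau> x = \<P>(\<omega> in M. U \<omega> \<le> \<tau> \<bar> X \<omega> = x)"

definition T_indep :: "'a measure \<Rightarrow> real set \<Rightarrow> ('a \<Rightarrow> real) \<Rightarrow> ('a \<Rightarrow> 'b) \<Rightarrow> bool" where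
  "T_indep M T U X \<longleftrightarrow>
     (\<forall>x \<in> disc_supp M X. \<forall>\<tau> \<in> T. cond_cdf_rv M U X \<tau> x = cdf_rv M U \<tau>)"

definition cprob_given :: "'a measure \<Rightarrow> ('a \<Rightarrow> 'b) \<Rightarrow> 'b \<Rightarrow> ('a \<Rightarrow> real) \<Rightarrow> 'a \<Rightarrow> real" where
  "cprob_given M X x U =
     real_cond_exp M (vimage_algebra (space M) U borel) (indicator {\<omega> \<in> space M. X \<omega> = x})"

definition cexp_event :: "'a measure \<Rightarrow> ('a \<Rightarrow> real) \<Rightarrow> 'a set \<Rightarrow> real" where
  "cexp_event M Y A = (\<integral>\<omega>. Y \<omega> * indicator A \<omega> \<partial>M) / measure M A"

end

theory Submission
  imports Defs
begin

lemma cexp_key: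
  fixes U :: "'a \<Rightarrow> real"
  assumes P: "prob_space M" and U_meas: "U \<in> borel_measurable M"
    and E: "E \<in> sets M" and S: "S \<in> sets borel"
  shows "cexp_event M (real_cond_exp M (vimage_algebra (space M) U borel) (indicator E))
           {\<omega> \<in> space M. U \<omega> \<in> S}
         = measure M (E \<inter> {\<omega> \<in> space M. U \<omega> \<in> S}) / measure M {\<omega> \<in> space M. U \<omega> \<in> S}"
proof -
  interpret prob_space M by fact
  let ?F = "vimage_algebra (space M) U borel"
  have sub: "subalgebra M ?F"
    unfolding subalgebra_def using U_meas
    by (auto simp: sets_vimage_algebra_space measurable_iff_sets intro: sets_vimage_algebra_space)
  interpret finite_measure_subalgebra M ?F
    by unfold_locales (fact sub)
  let ?A = "{\<omega> \<in> space M. U \<omega> \<in> S}"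
  have AF: "?A \<in> sets ?F"
    using in_vimage_algebra[OF S, of U "space M"] by (simp add: vimage_def Int_def conj_commute)
  have AM: "?A \<in> sets M" using U_meas S by measurable
  have int: "integrable M (indicator E :: 'a \<Rightarrow> real)"
    using E by (simp add: integrable_indicator_iff less_top[symmetric])
  have "(\<integral>\<omega>. real_cond_exp M ?F (indicator E) \<omega> * indicator ?A \<omega> \<partial>M)
      = (\<integral>\<omega> \<in> ?A. real_cond_exp M ?F (indicator E) \<omega> \<partial>M)"
    by (simp add: set_lebesgue_integral_def mult.commute)
  also have "\<dots> = (\<integral>\<omega> \<in> ?A. indicator E \<omega> \<partial>M)"
    using real_cond_exp_intA[OF int AF] by simp
  also have "\<dots> = measure M (E \<inter> ?A)"
    using E AM by (simp add: set_lebesgue_integral_def indicator_inter_arith[symmetric] mult.commute)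
  finally show ?thesis unfolding cexp_event_def by simp
qed


lemma unif_prob:
  fixes U :: "'a \<Rightarrow> real"
  assumes U_meas: "U \<in> borel_measurable M"
    and U_unif: "distr M lborel U = uniform_measure lborel {0..1}"
    and S: "S \<in> sets borel"
  shows "measure M {\<omega> \<in> space M. U \<omega> \<in> S} = measure lborel ({0..1} \<inter> S)"
proof -
  have "measure M {\<omega> \<in> space M. U \<omega> \<in> S} = measure (distr M lborel U) S"
    using U_meas S by (subst measure_distr) (auto simp: vimage_def Int_def conj_commute)
  also have "\<dots> = measure lborel ({0..1} \<inter> S) / measure lborel {0..1::real}"
    unfolding U_unif using S by (subst measure_uniform_measure) (auto simp: emeasure_lborel_Icc_eq)
  finally show ?thesis by simp
qed

lemma unif_point:
  fixes U :: "'a \<Rightarrow> real"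
  assumes U_meas: "U \<in> borel_measurable M"
    and U_unif: "distr M lborel U = uniform_measure lborel {0..1}"
  shows "measure M {\<omega> \<in> space M. U \<omega> = t} = 0"
proof -
  have "measure M {\<omega> \<in> space M. U \<omega> \<in> {t}} = measure lborel ({0..1} \<inter> {t})"
    by (rule unif_prob[OF assms]) simp
  also have "\<dots> = 0"
    by (cases "t \<in> {0..1}") auto
  finally show ?thesis by simp
qed

lemma unif_cdf:
  fixes U :: "'a \<Rightarrow> real"
  assumes U_meas: "U \<in> borel_measurable M"
    and U_unif: "distr M lborel U = uniform_measure lborel {0..1}"
  shows "measure M {\<omega> \<in> space M. U \<omega> \<le> t} = (if t < 0 then 0 else if t \<le> 1 then t else 1)"
proof -
  have "measure M {\<omega> \<in> space M. U \<omega> \<in> {..t}} = measure lborel ({0..1} \<inter> {..t})"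
    by (rule unif_prob[OF assms]) simp
  moreover have "{0..1} \<inter> {..t} = (if t < 0 then {} else if t \<le> 1 then {0..t} else {0..1})"
    by auto
  ultimately show ?thesis by auto
qed

lemma interval_prob:
  fixes U :: "'a \<Rightarrow> real"
  assumes P: "prob_space M" and U_meas: "U \<in> borel_measurable M"
    and U_unif: "distr M lborel U = uniform_measure lborel {0..1}"
    and E: "E \<in> sets M" and t: "t1 < t2"
  shows "measure M (E \<inter> {\<omega> \<in> space M. U \<omega> \<in> {t1<..<t2}}) =
    measure M (E \<inter> {\<omega> \<in> space M. U \<omega> \<le> t2}) - measure M (E \<inter> {\<omega> \<in> space M. U \<omega> \<le> t1})"
proof -
  interpret prob_space M by fact
  let ?A = "E \<inter> {\<omega> \<in> space M. U \<omega> \<le> t2}" and ?B = "E \<inter> {\<omega> \<in> space M. U \<omega> \<le> t1}"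
  let ?C = "E \<inter> {\<omega> \<in> space M. U \<omega> \<in> {t1<..<t2}}"
  have s: "{\<omega> \<in> space M. U \<omega> \<le> t2} \<in> sets M" "{\<omega> \<in> space M. U \<omega> \<le> t1} \<in> sets M"
     "{\<omega> \<in> space M. U \<omega> \<in> {t1<..<t2}} \<in> sets M" "{\<omega> \<in> space M. U \<omega> = t2} \<in> sets M"
    using U_meas by measurable
  have m: "?A \<in> sets M" "?B \<in> sets M" "?C \<in> sets M" "{\<omega> \<in> space M. U \<omega> = t2} \<in> sets M"
    using E s by auto
  have "measure M (?A - ?B) = measure M ?A - measure M ?B"
    using m t by (intro finite_measure_Diff) auto
  moreover have "measure M ((?A - ?B) - ?C) = measure M (?A - ?B) - measure M ?C"
    using m t by (intro finite_measure_Diff) auto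
  moreover have "measure M ((?A - ?B) - ?C) \<le> measure M {\<omega> \<in> space M. U \<omega> = t2}"
    using m by (intro finite_measure_mono) auto
  moreover note unif_point[OF U_meas U_unif, of t2]
  ultimately show ?thesis by (smt (verit) measure_nonneg)
qed


theorem theorem3:
  fixes M :: "'a measure" and X :: "'a \<Rightarrow> 'b" and U :: "'a \<Rightarrow> real" and T :: "real set"
  assumes "prob_space M"
    and X_meas: "X \<in> measurable M (count_space UNIV)"
    and X_disc: "countable (X ` space M)"
    and U_meas: "U \<in> borel_measurable M"
    and U_unif: "distr M lborel U = uniform_measure lborel {0..1}"
  shows "T_indep M T U X \<longleftrightarrow>
    (\<forall>t1 \<in> T \<union> {0, 1}. \<forall>t2 \<in> T \<union> {0, 1}.
       t1 < t2 \<and> \<P>(\<omega> in M. U \<omega> \<in> {t1<..<t2}) > 0 \<longrightarrow>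
       (\<forall>x \<in> disc_supp M X.
          cexp_event M (cprob_given M X x U) {\<omega> \<in> space M. U \<omega> \<in> {t1<..<t2}}
          = \<P>(\<omega> in M. X \<omega> = x)))"
proof -
  interpret prob_space M by fact
  define E where "E x = {\<omega> \<in> space M. X \<omega> = x}" for x
  define p where "p x = measure M (E x)" for x
  define G where "G t = measure M {\<omega> \<in> space M. U \<omega> \<le> t}" for t
  define H where "H x t = measure M (E x \<inter> {\<omega> \<in> space M. U \<omega> \<le> t})" for x t
  have EM: "E x \<in> sets M" for x
    unfolding E_def using X_meas by measurable
  have Ut: "{\<omega> \<in> space M. U \<omega> \<le> t} \<in> sets M" for t
    using U_meas by measurable
  have Gv: "G t = (if t < 0 then 0 else if t \<le> 1 then t else 1)" for t
    unfolding G_def by (rule unif_cdf[OF U_meas U_unif])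
  have HG: "H x t \<le> G t" for x t
    unfolding H_def G_def using EM Ut by (intro finite_measure_mono) auto
  have H0: "0 \<le> H x t" for x t unfolding H_def by simp
  have Hp: "H x t \<le> p x" for x t
    unfolding H_def p_def using EM Ut by (intro finite_measure_mono) auto
  have Hp2: "p x - (1 - G t) \<le> H x t" for x t
  proof -
    have "measure M (E x - {\<omega> \<in> space M. U \<omega> \<le> t}) = p x - H x t"
      unfolding p_def H_def using EM Ut
      by (subst finite_measure_Diff[symmetric]) (auto intro!: arg_cong[where f="measure M"])
    moreover have "measure M (E x - {\<omega> \<in> space M. U \<omega> \<le> t}) \<le> measure M (space M - {\<omega> \<in> space M. U \<omega> \<le> t})"
      using EM Ut sets.sets_into_space[OF EM] by (intro finite_measure_mono) auto
    moreover have "measure M (space M - {\<omega> \<in> space M. U \<omega> \<le> t}) = 1 - G t"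
      unfolding G_def using Ut by (simp add: prob_compl)
    ultimately show ?thesis by simp
  qed
  have Hlow: "t \<le> 0 \<Longrightarrow> H x t = 0" for x t
    using HG[of x t] H0[of x t] Gv[of t] by (auto split: if_splits)
  have Hhigh: "1 \<le> t \<Longrightarrow> H x t = p x" for x t
    using Hp[of x t] Hp2[of x t] Gv[of t] by (auto split: if_splits)
  have Iv: "t1 < t2 \<Longrightarrow> measure M (E x \<inter> {\<omega> \<in> space M. U \<omega> \<in> {t1<..<t2}}) = H x t2 - H x t1" for x t1 t2
    unfolding H_def by (rule interval_prob[OF assms(1) U_meas U_unif EM])
  have IvG: "t1 < t2 \<Longrightarrow> \<P>(\<omega> in M. U \<omega> \<in> {t1<..<t2}) = G t2 - G t1" for t1 t2
    using interval_prob[OF assms(1) U_meas U_unif sets.top, of t1 t2]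
    unfolding G_def by (simp add: Int_absorb1 Int_def)
  have cex: "cexp_event M (cprob_given M X x U) {\<omega> \<in> space M. U \<omega> \<in> {t1<..<t2}}
      = (H x t2 - H x t1) / (G t2 - G t1)" if "t1 < t2" for x t1 t2
    unfolding cprob_given_def
    using cexp_key[OF assms(1) U_meas EM, of "{t1<..<t2}" x] Iv[OF that, of x] IvG[OF that]
    by (simp add: E_def)
  have supp: "x \<in> disc_supp M X \<longleftrightarrow> p x > 0" for x
    unfolding disc_supp_def p_def E_def by simp
  have LHS: "T_indep M T U X \<longleftrightarrow> (\<forall>x. p x > 0 \<longrightarrow> (\<forall>\<tau>\<in>T. H x \<tau> = p x * G \<tau>))"
  proof -
    have "cond_cdf_rv M U X \<tau> x = H x \<tau> / p x" for \<tau> x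
      unfolding cond_cdf_rv_def cond_prob_def H_def p_def E_def
      by (auto intro!: arg_cong2[where f="(/)"] arg_cong[where f="measure M"])
    moreover have "cdf_rv M U \<tau> = G \<tau>" for \<tau> unfolding cdf_rv_def G_def by simp
    ultimately show ?thesis
      unfolding T_indep_def by (auto simp: supp field_simps)
  qed
  show ?thesis
    unfolding LHS
  proof (intro iffI ballI impI allI)
    fix t1 t2 x
    assume A: "\<forall>x. 0 < p x \<longrightarrow> (\<forall>\<tau>\<in>T. H x \<tau> = p x * G \<tau>)"
      and t1: "t1 \<in> T \<union> {0, 1}" and t2: "t2 \<in> T \<union> {0, 1}"
      and lt: "t1 < t2 \<and> 0 < \<P>(\<omega> in M. U \<omega> \<in> {t1<..<t2})" and px': "x \<in> disc_supp M X"
    have px: "0 < p x" using px' supp by simp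
    have all: "H x t = p x * G t" if "t \<in> T \<union> {0,1}" for t
      using that A px Hlow[of 0 x] Hhigh[of 1 x] Gv[of 0] Gv[of 1] by auto
    have "G t2 - G t1 > 0" using lt IvG by auto
    then show "cexp_event M (cprob_given M X x U) {\<omega> \<in> space M. U \<omega> \<in> {t1<..<t2}} = \<P>(\<omega> in M. X \<omega> = x)"
    proof -
      have "H x t2 - H x t1 = p x * (G t2 - G t1)"
        using all[OF t1] all[OF t2] by (simp add: right_diff_distrib)
      then show ?thesis using cex[of t1 t2 x] lt \<open>G t2 - G t1 > 0\<close> by (simp add: p_def E_def)
    qed
  next
    fix x \<tau>
    assume B: "\<forall>t1\<in>T \<union> {0, 1}. \<forall>t2\<in>T \<union> {0, 1}. t1 < t2 \<and> 0 < \<P>(\<omega> in M. U \<omega> \<in> {t1<..<t2}) \<longrightarrow>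
             (\<forall>x\<in>disc_supp M X. cexp_event M (cprob_given M X x U) {\<omega> \<in> space M. U \<omega> \<in> {t1<..<t2}} = \<P>(\<omega> in M. X \<omega> = x))"
      and px: "0 < p x" and tT: "\<tau> \<in> T"
    show "H x \<tau> = p x * G \<tau>"
    proof (cases "\<tau> \<le> 0")
      case True then show ?thesis using Hlow[of \<tau> x] Gv[of \<tau>] by auto
    next
      case False
      show ?thesis
      proof (cases "1 \<le> \<tau>")
        case True then show ?thesis using Hhigh[of \<tau> x] Gv[of \<tau>] by auto
      next
        case F2: False
        have pos: "G \<tau> - G 0 > 0" using False F2 Gv[of \<tau>] Gv[of 0] by auto
        have "cexp_event M (cprob_given M X x U) {\<omega> \<in> space M. U \<omega> \<in> {0<..<\<tau>}} = p x"
          using B tT px pos IvG[of 0 \<tau>] False supp[of x] unfolding p_def E_def by auto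
        then have "(H x \<tau> - H x 0) / (G \<tau> - G 0) = p x" using cex[of 0 \<tau> x] False by simp
        then show ?thesis using pos Hlow[of 0 x] Gv[of 0] by (simp add: field_simps)
      qed
    qed
  qed
qed

end
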